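(* Suppose that $k \mid n$, and that $J$ is a $k$-system on $n$ vertices with $$\delta(J) \geq \left(n, (k-1)n/k, (k-2)n/k, \dots, n/k \right).$$ Then $J_k$ admits a fractional perfect matching.
   Context: A $k$-system is a hypergraph $J$ (identified with its edge set) with every edge of size at most $k$ and $\emptyset\in J$; $J_r$ is the $r$-graph of edges of size $r$. The degree $d(e)$ of an edge $e$ is the number of edges of size $|e|+1$ containing $e$; $\delta_r(J)$ is the minimum of $d(e)$ over edges of size $r$; $\delta(J)=(\delta_0(J),\dots,\delta_{k-1}(J))$, compared pointwise. A fractional perfect matching in a hypergraph $H$ is an assignment of weights $w_e\ge 0$ to the edges of $H$ such that for every vertex $v$, $\sum_{e\ni v} w_e=1$. *)

theory Defs
  imports "HOL-Analysis.Analysis"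
begin

definition k_system :: "'a set \<Rightarrow> nat \<Rightarrow> 'a set set \<Rightarrow> bool" where
  "k_system V k J \<longleftrightarrow> (\<forall>e\<in>J. e \<subseteq> V \<and> card e \<le> k) \<and> {} \<in> J"

definition layer :: "'a set set \<Rightarrow> nat \<Rightarrow> 'a set set" where
  "layer J r = {e \<in> J. card e = r}"

definition sys_deg :: "'a set set \<Rightarrow> 'a set \<Rightarrow> nat" where
  "sys_deg J e = card {f \<in> J. card f = card e + 1 \<and> e \<subseteq> f}"

text \<open>Minimum r-degree; taken as a lower-bound condition (min over edges of size r).\<close>
definition min_deg_ge :: "'a set set \<Rightarrow> nat \<Rightarrow> real \<Rightarrow> bool" where
  "min_deg_ge J r d \<longleftrightarrow> (\<forall>e\<in>layer J r. real (sys_deg J e) \<ge> d)"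

definition fractional_perfect_matching :: "'a set \<Rightarrow> 'a set set \<Rightarrow> ('a set \<Rightarrow> real) \<Rightarrow> bool" where
  "fractional_perfect_matching V H w \<longleftrightarrow>
     (\<forall>e\<in>H. w e \<ge> 0) \<and> (\<forall>v\<in>V. (\<Sum>e\<in>{e\<in>H. v \<in> e}. w e) = 1)"

end

theory Submission
  imports Defs
begin


lemma sorted_list_exists:
  fixes V :: "'a set" and y :: "'a \<Rightarrow> real"
  assumes "finite V"
  obtains L where "distinct L" "set L = V" "sorted (map y L)" "length L = card V"
proof -
  obtain xs where xs: "distinct xs" "set xs = V" using finite_distinct_list[OF assms] by blast
  let ?L = "sort_key y xs"
  have "distinct ?L" "set ?L = V" "sorted (map y ?L)" using xs by auto
  moreover have "length ?L = card V" using \<open>distinct ?L\<close> \<open>set ?L = V\<close> distinct_card by metis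
  ultimately show ?thesis using that by blast
qed

lemma select_small:
  fixes L :: "'a list" and y :: "'a \<Rightarrow> real"
  assumes d: "distinct L" and s: "sorted (map y L)" and n: "length L = n"
    and m: "m < n" and S: "S \<subseteq> set L" and cS: "card S \<ge> n - m"
  shows "\<exists>v\<in>S. y v \<le> y (L ! m)"
proof (rule ccontr)
  assume "\<not> ?thesis"
  hence big: "\<forall>v\<in>S. y v > y (L ! m)" by auto
  have "S \<subseteq> (\<lambda>i. L ! i) ` {m+1..<n}"
  proof
    fix v assume v: "v \<in> S"
    then obtain i where i: "i < n" "v = L ! i" using S n by (metis in_set_conv_nth subsetD)
    have "\<not> i \<le> m"
    proof
      assume "i \<le> m"
      hence "(map y L) ! i \<le> (map y L) ! m" using sorted_nth_mono[OF s, of i m] m n by simp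
      hence "y v \<le> y (L ! m)" using i m n by simp
      thus False using big v by auto
    qed
    thus "v \<in> (\<lambda>i. L ! i) ` {m+1..<n}" using i by auto
  qed
  hence "card S \<le> card ((\<lambda>i. L ! i) ` {m+1..<n})" by (intro card_mono) auto
  also have "\<dots> \<le> card {m+1..<n}" by (rule card_image_le) auto
  finally show False using cS m by simp
qed

lemma sum_blocks_bound:
  fixes L :: "'a list" and y :: "'a \<Rightarrow> real"
  assumes s: "sorted (map y L)" and n: "length L = k * q"
  shows "(\<Sum>i<k. y (L ! (i*q))) * q \<le> (\<Sum>j<k*q. y (L ! j))"
proof -
  have "(\<Sum>i<k. y (L ! (i*q))) * q = (\<Sum>i<k. (\<Sum>j\<in>{i*q..<i*q+q}. y (L ! (i*q))))"
    unfolding sum_distrib_right by (simp add: mult.commute)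
  also have "\<dots> \<le> (\<Sum>i<k. (\<Sum>j\<in>{i*q..<i*q+q}. y (L ! j)))"
  proof (intro sum_mono)
    fix i j assume i: "i \<in> {..<k}" and j: "j \<in> {i*q..<i*q+q}"
    have "j < k*q"
    proof -
      have "i*q+q \<le> k*q" using i by (metis lessThan_iff add.commute mult_Suc Suc_leI mult_le_mono1)
      thus ?thesis using j by simp
    qed
    hence "(map y L) ! (i*q) \<le> (map y L) ! j" using sorted_nth_mono[OF s, of "i*q" j] j n by simp
    moreover have "i*q < length L" using i j \<open>j < k*q\<close> n by simp
    ultimately show "y (L ! (i*q)) \<le> y (L ! j)" using \<open>j < k*q\<close> j n by simp
  qed
  also have "\<dots> = (\<Sum>j<k*q. y (L ! j))" by (rule sum.nat_group)
  finally show ?thesis .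
qed

lemma sum_list_nth_set:
  fixes L :: "'a list" and y :: "'a \<Rightarrow> real"
  assumes "distinct L"
  shows "(\<Sum>j<length L. y (L ! j)) = (\<Sum>v\<in>set L. y v)"
proof -
  have "(\<Sum>v\<in>set L. y v) = sum_list (map y L)"
    using sum_list_distinct_conv_sum_set[OF assms, of y] by simp
  also have "\<dots> = (\<Sum>j<length L. y (L ! j))"
    by (simp add: sum_list_sum_nth atLeast0LessThan)
  finally show ?thesis by simp
qed

lemma greedy:
  fixes V :: "'a set" and J :: "'a set set" and k q :: nat and y :: "'a \<Rightarrow> real"
  assumes fin: "finite V" and cV: "card V = k*q" and q: "q > 0" and k: "k > 0"
    and ks: "k_system V k J"
    and deg: "\<forall>r<k. min_deg_ge J r (real (k - r) * real (k*q) / real k)"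
  shows "\<exists>e\<in>layer J k. (\<Sum>v\<in>e. y v) * q \<le> (\<Sum>v\<in>V. y v)"
proof -
  obtain L where L: "distinct L" "set L = V" "sorted (map y L)" "length L = card V"
    using sorted_list_exists[OF fin] by blast
  define T where "T i = y (L ! (i*q))" for i
  have step: "\<exists>f\<in>layer J (Suc r). (\<Sum>v\<in>f. y v) \<le> (\<Sum>v\<in>e. y v) + T r"
    if r: "r < k" and e: "e \<in> layer J r" for r e
  proof -
    have eJ: "e \<in> J" "card e = r" using e by (auto simp: layer_def)
    have eV: "e \<subseteq> V" using ks eJ by (auto simp: k_system_def)
    define F where "F = {f \<in> J. card f = card e + 1 \<and> e \<subseteq> f}"
    have "real (card F) \<ge> real (k - r) * real (k*q) / real k"
      using deg r e unfolding min_deg_ge_def sys_deg_def F_def by auto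
    moreover have "real (k - r) * real (k*q) / real k = real ((k-r)*q)" using k by simp
    ultimately have cF: "card F \<ge> (k-r)*q" by linarith
    have FV: "\<And>f. f \<in> F \<Longrightarrow> f \<subseteq> V" using ks unfolding F_def k_system_def by auto
    have finF: "finite F" using FV fin by (meson finite_Pow_iff finite_subset PowI subsetI)
    define g where "g f = the_elem (f - e)" for f
    have gprop: "f - e = {g f}" if "f \<in> F" for f
    proof -
      have ff: "finite f" using FV[OF that] fin finite_subset by blast
      have "card (f - e) = 1" using that card_Diff_subset[of e f] ff eJ unfolding F_def
        by (auto intro: finite_subset)
      then obtain x where "f - e = {x}" using card_1_singletonE by blast
      thus ?thesis by (simp add: g_def)
    qed
    have fins: "f = insert (g f) e" "g f \<notin> e" if "f \<in> F" for f
      using gprop[OF that] that unfolding F_def by blast+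
    have inj: "inj_on g F" by (rule inj_onI) (metis fins(1))
    have SV: "g ` F \<subseteq> set L" using gprop FV L(2) by blast
    have rk: "r*q < k*q" using r q by simp
    have "card (g ` F) \<ge> k*q - r*q" using card_image[OF inj] cF by (simp add: diff_mult_distrib)
    then obtain v where v: "v \<in> g ` F" "y v \<le> y (L ! (r*q))"
      using select_small[OF L(1) L(3) _ rk SV] L(4) cV by auto
    then obtain f where f: "f \<in> F" "v = g f" by blast
    have fin_e: "finite e" using eV fin finite_subset by blast
    have "(\<Sum>v\<in>f. y v) = y v + (\<Sum>v\<in>e. y v)"
      using fins[OF f(1)] f(2) fin_e by (metis sum.insert)
    moreover have "f \<in> layer J (Suc r)" using f(1) eJ unfolding F_def layer_def by auto
    ultimately show ?thesis using v(2) unfolding T_def by (intro bexI[of _ f]) auto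
  qed
  have ind: "r \<le> k \<Longrightarrow> \<exists>e\<in>layer J r. (\<Sum>v\<in>e. y v) \<le> (\<Sum>i<r. T i)" for r
  proof (induction r)
    case 0
    have "{} \<in> layer J 0" using ks by (simp add: k_system_def layer_def)
    thus ?case by force
  next
    case (Suc r)
    then obtain e where e: "e \<in> layer J r" "(\<Sum>v\<in>e. y v) \<le> (\<Sum>i<r. T i)" by auto
    obtain f where "f \<in> layer J (Suc r)" "(\<Sum>v\<in>f. y v) \<le> (\<Sum>v\<in>e. y v) + T r"
      using step[OF _ e(1)] Suc.prems by auto
    thus ?case using e(2) by (intro bexI[of _ f]) auto
  qed
  obtain e where e: "e \<in> layer J k" "(\<Sum>v\<in>e. y v) \<le> (\<Sum>i<k. T i)" using ind by blast
  have "(\<Sum>v\<in>e. y v) * q \<le> (\<Sum>i<k. T i) * q" using e(2) by (simp add: mult_right_mono)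
  also have "\<dots> \<le> (\<Sum>j<k*q. y (L ! j))" unfolding T_def
    by (rule sum_blocks_bound[OF L(3)]) (simp add: L(4) cV)
  also have "\<dots> = (\<Sum>v\<in>V. y v)" using sum_list_nth_set[OF L(1), of y] L cV by simp
  finally show ?thesis using e(1) by blast
qed



lemma W_compact:
  fixes E :: "'b set"
  shows "compact {w :: 'b \<Rightarrow> real. (\<forall>e. w e \<in> (if e \<in> E then {0..1} else {0})) \<and> sum w E = 1}"
proof -
  let ?S = "\<lambda>e. if e \<in> E then {0..1::real} else {0}"
  have "compactin (product_topology (\<lambda>_. euclidean) UNIV) (PiE UNIV ?S)"
    by (subst compactin_PiE) auto
  hence c1: "compact (PiE UNIV ?S)" by (simp add: euclidean_product_topology)
  have cont: "continuous_on UNIV (\<lambda>w::'b\<Rightarrow>real. sum w E)"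
    by (intro continuous_intros continuous_on_product_coordinates)
  have c2: "closed {w :: 'b \<Rightarrow> real. sum w E = 1}"
    using closed_Collect_eq[OF cont continuous_on_const] by simp
  have eq: "{w :: 'b \<Rightarrow> real. (\<forall>e. w e \<in> ?S e) \<and> sum w E = 1} = PiE UNIV ?S \<inter> {w. sum w E = 1}"
    by (auto simp: PiE_UNIV_domain Pi_iff split: if_splits; metis atLeastAtMost_iff singletonD)
  show ?thesis unfolding eq using c1 c2 by (rule compact_Int_closed)
qed

lemma f_cont:
  fixes E :: "'b set set" and V :: "'b set" and q :: real
  shows "continuous_on S (\<lambda>w::'b set \<Rightarrow> real. \<Sum>v\<in>V. (1 - q * (\<Sum>e\<in>{e\<in>E. v\<in>e}. w e))^2)"
  by (intro continuous_intros continuous_on_subset[OF continuous_on_product_coordinates]) auto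


lemma small_t:
  fixes X B :: real
  assumes B: "B \<ge> 0" and h: "\<And>t. 0 < t \<Longrightarrow> t \<le> 1 \<Longrightarrow> 0 \<le> 2*t*X + t^2*B"
  shows "X \<ge> 0"
proof (rule ccontr)
  assume "\<not> X \<ge> 0"
  hence X: "X < 0" by simp
  define t where "t = min 1 (-X/(B+1))"
  have "X/(B+1) < 0" using X B by (simp add: divide_neg_pos)
  hence t0: "0 < t" "t \<le> 1" by (auto simp: t_def)
  have "t \<le> -X/(B+1)" by (simp add: t_def)
  hence "t * B \<le> (-X/(B+1)) * B" using B by (rule mult_right_mono)
  also have "\<dots> < -X" using X B by (simp add: field_simps)
  finally have tb: "t * B < -X" .
  have "0 \<le> 2*t*X + t^2*B" using h t0 by simp
  also have "\<dots> = t * (2*X + t*B)" by (simp add: power2_eq_square algebra_simps)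
  finally have "0 \<le> 2*X + t*B" using t0 by (simp add: zero_le_mult_iff)
  thus False using tb X by linarith
qed

theorem lemma3p6:
  fixes V :: "'a set" and J :: "'a set set" and k n :: nat
  assumes "finite V" and "card V = n"
    and "k dvd n"
    and "k_system V k J"
    and "\<forall>r<k. min_deg_ge J r (real (k - r) * real n / real k)"
  shows "\<exists>w. fractional_perfect_matching V (layer J k) w"
proof (cases "n = 0")
  case True
  hence "V = {}" using assms(1,2) by simp
  thus ?thesis by (auto simp: fractional_perfect_matching_def intro: exI[of _ "\<lambda>_. 0"])
next
  case False
  have k: "k > 0" using assms(3) False by (metis dvd_0_left_iff gr0I)
  obtain q where nq: "n = k*q" using assms(3) by (auto elim: dvdE)
  have q: "q > 0" using False nq by simp
  have deg': "\<forall>r<k. min_deg_ge J r (real (k - r) * real (k*q) / real k)" using assms(5) nq by simp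
  have cV: "card V = k*q" using assms(2) nq by simp
  note gr = greedy[OF assms(1) cV q k assms(4) deg']
  define E where "E = layer J k"
  have EV: "\<And>e. e \<in> E \<Longrightarrow> e \<subseteq> V" using assms(4) by (auto simp: E_def layer_def k_system_def)
  have finE: "finite E" using EV assms(1) by (meson finite_Pow_iff finite_subset PowI subsetI)
  obtain e0 where e0: "e0 \<in> E" using gr[of "\<lambda>_. 0"] unfolding E_def by blast
  define W where "W = {w :: 'a set \<Rightarrow> real. (\<forall>e. w e \<in> (if e \<in> E then {0..1} else {0})) \<and> sum w E = 1}"
  define f where "f w = (\<Sum>v\<in>V. (1 - real q * (\<Sum>e\<in>{e\<in>E. v\<in>e}. w e))^2)" for w :: "'a set \<Rightarrow> real"
  have "(\<lambda>e. if e = e0 then 1 else 0) \<in> W" using e0 finE unfolding W_def by (auto simp: sum.delta)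
  hence Wne: "W \<noteq> {}" by blast
  obtain ws where ws: "ws \<in> W" "\<And>w. w \<in> W \<Longrightarrow> f ws \<le> f w"
    using continuous_attains_inf[OF W_compact[of E, folded W_def] Wne f_cont[where S=W and E=E and V=V and q="real q", folded f_def]]
    by blast
  define a where "a v = 1 - real q * (\<Sum>e\<in>{e\<in>E. v\<in>e}. ws e)" for v
  have wsA: "\<forall>e. ws e \<in> (if e \<in> E then {0..1} else {0})" "sum ws E = 1"
    using ws(1) unfolding W_def by auto
  have wsE1: "0 \<le> ws e \<and> ws e \<le> 1" if "e \<in> E" for e
    using wsA(1)[rule_format, of e] that by simp
  have wsE2: "ws e = 0" if "e \<notin> E" for e
    using wsA(1)[rule_format, of e] that by simp
  note wsE = wsE1 wsE2 wsA(2)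
  show ?thesis
  proof (cases "\<forall>v\<in>V. a v = 0")
    case True
    have "fractional_perfect_matching V E (\<lambda>e. real q * ws e)"
      unfolding fractional_perfect_matching_def
    proof (intro conjI ballI)
      fix e assume "e \<in> E" thus "0 \<le> real q * ws e" using wsE(1) by simp
    next
      fix v assume "v \<in> V"
      hence "a v = 0" using True by blast
      thus "(\<Sum>e\<in>{e\<in>E. v\<in>e}. real q * ws e) = 1" unfolding a_def by (simp add: sum_distrib_left)
    qed
    thus ?thesis unfolding E_def by blast
  next
    case False
    then obtain v0 where v0: "v0 \<in> V" "a v0 \<noteq> 0" by blast
    define D where "D = (\<Sum>v\<in>V. (a v)^2)"
    have Dpos: "D > 0" unfolding D_def
      by (rule sum_pos2[OF assms(1) v0(1)]) (use v0 in auto)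
    have fws: "f ws = D" unfolding f_def D_def a_def by simp
    have key: "(\<Sum>v\<in>e0. a v) * q \<le> (\<Sum>v\<in>V. a v) - D" if e0: "e0 \<in> E" for e0
    proof -
      define d where "d v = (1 - a v) - real q * (if v \<in> e0 then 1 else 0)" for v
      define X where "X = (\<Sum>v\<in>V. a v * d v)"
      define B where "B = (\<Sum>v\<in>V. (d v)^2)"
      have B0: "B \<ge> 0" unfolding B_def by (intro sum_nonneg) auto
      have main: "0 \<le> 2*t*X + t^2*B" if t: "0 < t" "t \<le> 1" for t
      proof -
        define wt where "wt e = (1-t)*ws e + t*(if e = e0 then 1 else 0)" for e
        have "wt \<in> W" unfolding W_def
        proof (intro CollectI conjI allI)
          fix e show "wt e \<in> (if e \<in> E then {0..1} else {0})"
          proof (cases "e \<in> E")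
            case True
            have "0 \<le> (1-t)*ws e" using wsE(1)[OF True] t by simp
            moreover have "(1-t)*ws e \<le> (1-t)" using wsE(1)[OF True] t by (simp add: mult_left_le)
            ultimately show ?thesis using True t by (auto simp: wt_def)
          next
            case False
            thus ?thesis using wsE(2) e0 by (auto simp: wt_def)
          qed
        next
          have "sum wt E = (1-t) * sum ws E + t * sum (\<lambda>e. if e = e0 then 1 else 0) E"
            unfolding wt_def by (simp add: sum.distrib sum_distrib_left)
          thus "sum wt E = 1" using wsE(3) e0 finE by (simp add: sum.delta)
        qed
        hence le: "f ws \<le> f wt" using ws(2) by blast
        have pt: "1 - real q * (\<Sum>e\<in>{e\<in>E. v\<in>e}. wt e) = a v + t * d v" for v
        proof -
          have fin: "finite {e\<in>E. v\<in>e}" using finE by simp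
          have "(\<Sum>e\<in>{e\<in>E. v\<in>e}. wt e) = (1-t) * (\<Sum>e\<in>{e\<in>E. v\<in>e}. ws e) + t * (\<Sum>e\<in>{e\<in>E. v\<in>e}. if e = e0 then 1 else 0)"
            unfolding wt_def by (simp add: sum.distrib sum_distrib_left)
          also have "(\<Sum>e\<in>{e\<in>E. v\<in>e}. if e = e0 then 1 else (0::real)) = (if v \<in> e0 then 1 else 0)"
            using fin e0 by (simp add: sum.delta)
          finally have sw: "(\<Sum>e\<in>{e\<in>E. v\<in>e}. wt e) = (1-t) * (\<Sum>e\<in>{e\<in>E. v\<in>e}. ws e) + t * (if v \<in> e0 then 1 else 0)" .
          show ?thesis unfolding a_def d_def by (simp only: sw) (simp add: algebra_simps)
        qed
        have "f wt = (\<Sum>v\<in>V. (a v + t * d v)^2)" unfolding f_def using pt by simp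
        also have "\<dots> = (\<Sum>v\<in>V. (a v)^2 + 2*t*(a v * d v) + t^2 * (d v)^2)"
          by (intro sum.cong) (auto simp: power2_eq_square algebra_simps)
        also have "\<dots> = D + 2*t*X + t^2*B" unfolding D_def X_def B_def
          by (simp add: sum.distrib sum_distrib_left)
        finally show ?thesis using le fws by simp
      qed
      have X0: "X \<ge> 0" by (rule small_t[OF B0 main])
      have e0V: "e0 \<subseteq> V" using EV e0 by blast
      have "X = (\<Sum>v\<in>V. (a v - (a v)^2) - real q * (if v \<in> e0 then a v else 0))"
        unfolding X_def d_def by (intro sum.cong) (auto simp: power2_eq_square algebra_simps)
      also have "\<dots> = (\<Sum>v\<in>V. a v - (a v)^2) - real q * (\<Sum>v\<in>V. if v \<in> e0 then a v else 0)"
        by (simp add: sum_subtractf sum_distrib_left)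
      also have "(\<Sum>v\<in>V. if v \<in> e0 then a v else 0) = (\<Sum>v\<in>e0. a v)"
        using sum.inter_restrict[OF assms(1), of a e0] e0V by (simp add: Int_absorb1)
      finally have "X = (\<Sum>v\<in>V. a v) - D - real q * (\<Sum>v\<in>e0. a v)"
        unfolding D_def by (simp add: sum_subtractf)
      thus ?thesis using X0 by (simp add: mult.commute)
    qed
    obtain e where e: "e \<in> E" "(\<Sum>v\<in>e. - a v) * q \<le> (\<Sum>v\<in>V. - a v)"
      using gr[of "\<lambda>v. - a v"] unfolding E_def by blast
    have "(\<Sum>v\<in>V. a v) \<le> (\<Sum>v\<in>e. a v) * q" using e(2) by (simp add: sum_negf)
    thus ?thesis using key[OF e(1)] Dpos by linarith
  qed
qed

end
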